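(* Let $h=z+\sum_{l\ge1}h_l(x)z^{-l}$ and $k=z^2+\sum_{l\ge1}k_l(x)z^{-l}$ satisfy the Riccati system $$h_x+hk=z^3+h_1h+(h_2+k_1),\qquad k_x+k^2=-h_1k+h\,(2k_1-h_2+z^3)-(h_3-2k_2).$$ Then all coefficients $h_j$ ($j\ge3$) and $k_j$ ($j\ge3$) are uniquely determined as differential polynomials (in $x$) in the four functions $h_1,h_2,k_1,k_2$; in particular $h_3=h_1^2-h_{1x}-k_2$. Conversely, for arbitrary smooth $h_1,h_2,k_1,k_2$ there is a unique such pair $(h,k)$. Hence $\mathcal Q^2_3$ is identified with the space of matrices $$\mathcal U(\lambda)=\begin{pmatrix}0&0&1\\ \lambda+h_2+k_1&h_1&0\\ 2k_2-h_3&\lambda+2k_1-h_2&-h_1\end{pmatrix},\qquad \lambda=z^3,$$ parametrized by $(h_1,h_2,k_1,k_2)$.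
   Context: These are the equations characterizing, in the coordinates $h=H^{(1)}$, $k=H^{(2)}$ on $\mathcal Q_2$ (space variable $x=t_2$), the subspace $\mathcal Q^2_3$ of integral curves of the central-system flow $X_2$ lying in $\mathcal S_3=\{H: X_3(H)=0,\ H^{(3)}=z^3\}$. Here $z$ is a formal variable and identities are identities of formal Laurent series, compared coefficient by coefficient in powers of $z$. *)

theory Defs
  imports "HOL-Analysis.Derivative" "HOL-Library.Function_Algebras"
    "HOL-Computational_Algebra.Formal_Laurent_Series"
begin

text \<open>Formal Laurent series in z with finitely many
  positive and possibly infinitely many negative powers are modelled as 'fls' in the
  variable w = z^{-1}: fls_X is w = z^{-1} and fls_X_inv is z.\<close>

type_synonym fn = "real \<Rightarrow> real"

definition smooth :: "fn \<Rightarrow> bool" where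
  "smooth f \<longleftrightarrow> (\<forall>n x. ((deriv ^^ n) f) differentiable (at x))"

definition zz :: "fn fls" where
  "zz = fls_X_inv"

definition ser :: "nat \<Rightarrow> (nat \<Rightarrow> fn) \<Rightarrow> fn fls" where
  "ser d c = zz ^ d + fps_to_fls (Abs_fps c)"

text \<open>x-derivative of ser d c (the leading z^d has constant coefficient).\<close>
definition Dx :: "(nat \<Rightarrow> fn) \<Rightarrow> fn fls" where
  "Dx c = fps_to_fls (Abs_fps (\<lambda>n. deriv (c n)))"

definition cst :: "fn \<Rightarrow> fn fls" where
  "cst f = fls_const f"

definition riccati :: "(nat \<Rightarrow> fn) \<Rightarrow> (nat \<Rightarrow> fn) \<Rightarrow> bool" where
  "riccati hc kc \<longleftrightarrow>
     (let h = ser 1 hc; k = ser 2 kc in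
        Dx hc + h * k = zz ^ 3 + cst (hc 1) * h + cst (hc 2 + kc 1)
      \<and> Dx kc + k * k = - (cst (hc 1) * k) + h * (cst (2 * kc 1 - hc 2) + zz ^ 3)
                         - cst (hc 3 - 2 * kc 2))"

definition Q23 :: "(nat \<Rightarrow> fn) \<Rightarrow> (nat \<Rightarrow> fn) \<Rightarrow> bool" where
  "Q23 hc kc \<longleftrightarrow> hc 0 = 0 \<and> kc 0 = 0 \<and> (\<forall>n. smooth (hc n) \<and> smooth (kc n))
                   \<and> riccati hc kc"

datatype var = H1 | H2 | K1 | K2

datatype dpoly = DConst real | DVar var nat | DAdd dpoly dpoly | DMul dpoly dpoly

fun deval :: "dpoly \<Rightarrow> (var \<Rightarrow> fn) \<Rightarrow> fn" where
  "deval (DConst c) u = (\<lambda>x. c)"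
| "deval (DVar v n) u = (deriv ^^ n) (u v)"
| "deval (DAdd p q) u = deval p u + deval q u"
| "deval (DMul p q) u = deval p u * deval q u"

definition params :: "(nat \<Rightarrow> fn) \<Rightarrow> (nat \<Rightarrow> fn) \<Rightarrow> var \<Rightarrow> fn" where
  "params hc kc v = (case v of H1 \<Rightarrow> hc 1 | H2 \<Rightarrow> hc 2 | K1 \<Rightarrow> kc 1 | K2 \<Rightarrow> kc 2)"

end

theory Submission
  imports Defs
begin

unbundle fps_syntax

section \<open>Coefficient equations\<close>

definition Shk :: "(nat \<Rightarrow> fn) \<Rightarrow> (nat \<Rightarrow> fn) \<Rightarrow> nat \<Rightarrow> fn" where
  "Shk h k n = (\<Sum>i=0..n. h i * k (n - i))"

definition E1 :: "(nat \<Rightarrow> fn) \<Rightarrow> (nat \<Rightarrow> fn) \<Rightarrow> nat \<Rightarrow> bool" where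
  "E1 h k m \<longleftrightarrow> deriv (h m) + k (m+1) + h (m+2) + Shk h k m = h 1 * h m"

definition E2 :: "(nat \<Rightarrow> fn) \<Rightarrow> (nat \<Rightarrow> fn) \<Rightarrow> nat \<Rightarrow> bool" where
  "E2 h k m \<longleftrightarrow> deriv (k m) + 2 * k (m+2) + Shk k k m
     = - (h 1 * k m) + (2 * k 1 - h 2) * h m + h (m+3)"

lemma deriv_zero_fn [simp]: "deriv (0::fn) = 0"
  by (simp add: zero_fun_def)

lemma l1:
  assumes h0: "hc 0 = 0" and k0: "kc 0 = 0"
  shows "(Dx hc + ser 1 hc * ser 2 kc) $$ n = (zz ^ 3 + cst (hc 1) * ser 1 hc + cst (hc 2 + kc 1)) $$ n
   \<longleftrightarrow> (n \<ge> 1 \<longrightarrow> E1 hc kc (nat n))"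
proof (cases "n \<ge> 1")
  case True
  define m where "m = nat n"
  have m: "n = int m" "m \<ge> 1" using True by (auto simp: m_def)
  show ?thesis
    unfolding ser_def zz_def Dx_def cst_def m E1_def Shk_def
    using m(2)
    by (simp add: ring_distribs fls_X_inv_power_times_conv_shift fls_X_inv_times_conv_shift fps_mult_nth
       nat_add_distrib add_ac flip: fls_times_fps_to_fls)
next
  case False
  then have "n < -3 \<or> n = -3 \<or> n = -2 \<or> n = -1 \<or> n = 0" by linarith
  then show ?thesis
    unfolding ser_def zz_def Dx_def cst_def
    using False 
    by (auto simp add: h0 k0 ring_distribs fls_X_inv_power_times_conv_shift fls_X_inv_times_conv_shift fps_mult_nth
        simp flip: fls_times_fps_to_fls)
qed

lemma l2:
  assumes h0: "hc 0 = 0" and k0: "kc 0 = 0"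
  shows "(Dx kc + ser 2 kc * ser 2 kc) $$ n = (- (cst (hc 1) * ser 2 kc) + ser 1 hc * (cst (2 * kc 1 - hc 2) + zz ^ 3)
                         - cst (hc 3 - 2 * kc 2)) $$ n
   \<longleftrightarrow> (n \<ge> 1 \<longrightarrow> E2 hc kc (nat n))"
proof (cases "n \<ge> 1")
  case True
  define m where "m = nat n"
  have m: "n = int m" "m \<ge> 1" using True by (auto simp: m_def)
  show ?thesis
    unfolding ser_def zz_def Dx_def cst_def m E2_def Shk_def
    using m(2)
    by (simp add: ring_distribs fls_X_inv_power_times_conv_shift fls_X_inv_times_conv_shift fps_mult_nth
       nat_add_distrib algebra_simps flip: fls_times_fps_to_fls)
next
  case False
  then have "n < -4 \<or> n = -4 \<or> n = -3 \<or> n = -2 \<or> n = -1 \<or> n = 0" by linarith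
  then show ?thesis
    unfolding ser_def zz_def Dx_def cst_def
    using False 
    by (auto simp add: h0 k0 ring_distribs fls_X_inv_power_times_conv_shift fls_X_inv_times_conv_shift fps_mult_nth
        simp flip: fls_times_fps_to_fls)
qed

lemma int_nat_all: "(\<forall>n::int. 1 \<le> n \<longrightarrow> P (nat n)) \<longleftrightarrow> (\<forall>m::nat. 1 \<le> m \<longrightarrow> P m)"
proof
  assume A: "\<forall>n::int. 1 \<le> n \<longrightarrow> P (nat n)"
  show "\<forall>m::nat. 1 \<le> m \<longrightarrow> P m"
  proof (intro allI impI)
    fix m :: nat assume "1 \<le> m"
    then show "P m" using A[rule_format, of "int m"] by simp
  qed
next
  assume B: "\<forall>m::nat. 1 \<le> m \<longrightarrow> P m"
  show "\<forall>n::int. 1 \<le> n \<longrightarrow> P (nat n)"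
    using B by simp
qed

lemma ric_iff:
  assumes h0: "hc 0 = 0" and k0: "kc 0 = 0"
  shows "riccati hc kc \<longleftrightarrow> (\<forall>n\<ge>1. E1 hc kc n \<and> E2 hc kc n)"
proof -
  have "riccati hc kc \<longleftrightarrow> (\<forall>n::int. 1 \<le> n \<longrightarrow> E1 hc kc (nat n)) \<and> (\<forall>n::int. 1 \<le> n \<longrightarrow> E2 hc kc (nat n))"
    unfolding riccati_def Let_def fls_eq_iff using l1[of hc kc, OF h0 k0] l2[of hc kc, OF h0 k0] by simp
  also have "\<dots> \<longleftrightarrow> (\<forall>n::nat. 1 \<le> n \<longrightarrow> E1 hc kc n) \<and> (\<forall>n::nat. 1 \<le> n \<longrightarrow> E2 hc kc n)"
    by (simp only: int_nat_all)
  finally show ?thesis by blast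
qed

section \<open>Recursive form\<close>

definition hF :: "(nat \<Rightarrow> fn) \<Rightarrow> (nat \<Rightarrow> fn) \<Rightarrow> nat \<Rightarrow> fn" where
  "hF h k m = h 1 * h (m-2) - deriv (h (m-2)) - k (m-1) - Shk h k (m-2)"

definition kF :: "(nat \<Rightarrow> fn) \<Rightarrow> (nat \<Rightarrow> fn) \<Rightarrow> nat \<Rightarrow> fn" where
  "kF h k m = (\<lambda>_. 1/3) * (h 1 * h (m-1) - deriv (h (m-1)) - Shk h k (m-1)
      - deriv (k (m-2)) - Shk k k (m-2) - h 1 * k (m-2) + (2 * k 1 - h 2) * h (m-2))"

lemma key3r:
  fixes k a d s b :: real
  shows "(d + 2*k + s = b + a - k) \<longleftrightarrow> k = 1/3 * (a - d - s + b)"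
  by (auto simp: field_simps)

lemma key3:
  fixes K H3 A D S B :: fn
  assumes "H3 = A - K"
  shows "(D + 2*K + S = B + H3) \<longleftrightarrow> K = (\<lambda>_. 1/3) * (A - D - S + B)"
proof -
  have "(D + 2*K + S = B + H3) \<longleftrightarrow> (\<forall>x. D x + 2*K x + S x = B x + A x - K x)"
    using assms by (auto simp: fun_eq_iff)
  also have "\<dots> \<longleftrightarrow> (\<forall>x. K x = 1/3 * (A x - D x - S x + B x))"
    by (simp only: key3r)
  also have "\<dots> \<longleftrightarrow> K = (\<lambda>_. 1/3) * (A - D - S + B)"
    by (auto simp: fun_eq_iff)
  finally show ?thesis .
qed

lemma E1_iff: "E1 h k n \<longleftrightarrow> h (n+2) = hF h k (n+2)"
  unfolding E1_def hF_def by (auto simp: algebra_simps)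

lemma E2_iff:
  assumes "E1 h k (n+1)"
  shows "E2 h k n \<longleftrightarrow> k (n+2) = kF h k (n+2)"
proof -
  have H: "h (n+3) = (h 1 * h (n+1) - deriv (h (n+1)) - Shk h k (n+1)) - k (n+2)"
    using assms unfolding E1_def by (simp add: algebra_simps numeral_3_eq_3)
  have "E2 h k n \<longleftrightarrow> deriv (k n) + 2 * k (n+2) + Shk k k n
     = (- (h 1 * k n) + (2 * k 1 - h 2) * h n) + h (n+3)"
    unfolding E2_def by (simp add: add.assoc)
  also have "\<dots> \<longleftrightarrow> k (n+2) = (\<lambda>_. 1/3) * ((h 1 * h (n+1) - deriv (h (n+1)) - Shk h k (n+1))
        - deriv (k n) - Shk k k n + (- (h 1 * k n) + (2 * k 1 - h 2) * h n))"
    by (rule key3[OF H])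
  also have "\<dots> \<longleftrightarrow> k (n+2) = kF h k (n+2)"
    unfolding kF_def by (simp add: algebra_simps)
  finally show ?thesis .
qed

lemma rec_iff:
  "(\<forall>n\<ge>1. E1 h k n \<and> E2 h k n) \<longleftrightarrow> (\<forall>m\<ge>3. h m = hF h k m \<and> k m = kF h k m)"
proof
  assume A: "\<forall>n\<ge>1. E1 h k n \<and> E2 h k n"
  show "\<forall>m\<ge>3. h m = hF h k m \<and> k m = kF h k m"
  proof (intro allI impI)
    fix m :: nat assume "3 \<le> m"
    define n where "n = m - 2"
    have n: "m = n + 2" "n \<ge> 1" using \<open>3 \<le> m\<close> by (auto simp: n_def)
    have "E1 h k n" "E2 h k n" "E1 h k (n+1)" using A n by auto
    then show "h m = hF h k m \<and> k m = kF h k m"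
      using E1_iff[of h k n] E2_iff[of h k n] n by simp
  qed
next
  assume B: "\<forall>m\<ge>3. h m = hF h k m \<and> k m = kF h k m"
  show "\<forall>n\<ge>1. E1 h k n \<and> E2 h k n"
  proof (intro allI impI)
    fix n :: nat assume n: "1 \<le> n"
    have e1: "E1 h k n" using B[rule_format, of "n+2"] n E1_iff[of h k n] by simp
    have e1': "E1 h k (n+1)" using B[rule_format, of "n+3"] n E1_iff[of h k "n+1"]
      by (simp add: numeral_3_eq_3)
    have "E2 h k n" using B[rule_format, of "n+2"] n E2_iff[OF e1'] by simp
    then show "E1 h k n \<and> E2 h k n" using e1 by simp
  qed
qed

section \<open>Differential polynomials: derivative and smoothness\<close>

fun dd :: "dpoly \<Rightarrow> dpoly" where
  "dd (DConst c) = DConst 0"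
| "dd (DVar v n) = DVar v (Suc n)"
| "dd (DAdd p q) = DAdd (dd p) (dd q)"
| "dd (DMul p q) = DAdd (DMul (dd p) q) (DMul p (dd q))"

definition sm :: "(var \<Rightarrow> fn) \<Rightarrow> bool" where
  "sm u \<longleftrightarrow> (\<forall>v n x. ((deriv ^^ n) (u v)) differentiable (at x))"

lemma deval_differentiable:
  assumes "sm u"
  shows "deval p u differentiable (at x)"
proof (induction p)
  case (DConst c) then show ?case by simp
next
  case (DVar v n) then show ?case using assms by (simp add: sm_def)
next
  case (DAdd p q)
  have e: "deval (DAdd p q) u = (\<lambda>x. deval p u x + deval q u x)" by (simp add: fun_eq_iff)
  show ?case unfolding e using DAdd by (intro differentiable_add)
next
  case (DMul p q)
  have e: "deval (DMul p q) u = (\<lambda>x. deval p u x * deval q u x)" by (simp add: fun_eq_iff)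
  show ?case unfolding e using DMul by (intro differentiable_mult)
qed

lemma has_deriv_deval:
  assumes "sm u"
  shows "(deval p u has_real_derivative deriv (deval p u) x) (at x)"
  using deval_differentiable[OF assms] DERIV_deriv_iff_real_differentiable by blast

lemma deval_dd:
  assumes "sm u"
  shows "deriv (deval p u) = deval (dd p) u"
proof (induction p)
  case (DConst c) then show ?case by (simp add: fun_eq_iff)
next
  case (DVar v n) then show ?case by simp
next
  case (DAdd p q)
  show ?case
  proof
    fix x
    have e: "deval (DAdd p q) u = (\<lambda>x. deval p u x + deval q u x)" by (simp add: fun_eq_iff)
    have "((\<lambda>x. deval p u x + deval q u x) has_real_derivative
           deriv (deval p u) x + deriv (deval q u) x) (at x)"
      by (intro DERIV_add has_deriv_deval[OF assms])
    then have "deriv (deval (DAdd p q) u) x = deriv (deval p u) x + deriv (deval q u) x"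
      unfolding e by (rule DERIV_imp_deriv)
    then show "deriv (deval (DAdd p q) u) x = deval (dd (DAdd p q)) u x"
      using DAdd by simp
  qed
next
  case (DMul p q)
  show ?case
  proof
    fix x
    have e: "deval (DMul p q) u = (\<lambda>x. deval p u x * deval q u x)" by (simp add: fun_eq_iff)
    have "((\<lambda>x. deval p u x * deval q u x) has_real_derivative
           deriv (deval p u) x * deval q u x + deriv (deval q u) x * deval p u x) (at x)"
      by (intro DERIV_mult has_deriv_deval[OF assms])
    then have "deriv (deval (DMul p q) u) x = deriv (deval p u) x * deval q u x + deriv (deval q u) x * deval p u x"
      unfolding e by (rule DERIV_imp_deriv)
    then show "deriv (deval (DMul p q) u) x = deval (dd (DMul p q)) u x"
      using DMul by (simp add: mult.commute)
  qed
qed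

lemma deval_funpow:
  assumes "sm u"
  shows "(deriv ^^ n) (deval p u) = deval ((dd ^^ n) p) u"
  by (induction n) (simp_all add: deval_dd[OF assms])

lemma deval_smooth:
  assumes "sm u"
  shows "smooth (deval p u)"
  unfolding smooth_def deval_funpow[OF assms] using deval_differentiable[OF assms] by blast

section \<open>Syntactic recursion\<close>

definition dsum :: "dpoly list \<Rightarrow> dpoly" where
  "dsum ps = foldr DAdd ps (DConst 0)"

definition dneg :: "dpoly \<Rightarrow> dpoly" where
  "dneg p = DMul (DConst (-1)) p"

definition dsub :: "dpoly \<Rightarrow> dpoly \<Rightarrow> dpoly" where
  "dsub p q = DAdd p (dneg q)"

definition dShk :: "(nat \<Rightarrow> dpoly) \<Rightarrow> (nat \<Rightarrow> dpoly) \<Rightarrow> nat \<Rightarrow> dpoly" where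
  "dShk p q n = dsum (map (\<lambda>i. DMul (p i) (q (n - i))) [0..<Suc n])"

definition hS :: "(nat \<Rightarrow> dpoly) \<Rightarrow> (nat \<Rightarrow> dpoly) \<Rightarrow> nat \<Rightarrow> dpoly" where
  "hS p q m = dsub (dsub (dsub (DMul (p 1) (p (m-2))) (dd (p (m-2)))) (q (m-1))) (dShk p q (m-2))"

definition kS :: "(nat \<Rightarrow> dpoly) \<Rightarrow> (nat \<Rightarrow> dpoly) \<Rightarrow> nat \<Rightarrow> dpoly" where
  "kS p q m = DMul (DConst (1/3))
     (DAdd (dsub (dsub (dsub (dsub (dsub (DMul (p 1) (p (m-1))) (dd (p (m-1)))) (dShk p q (m-1)))
        (dd (q (m-2)))) (dShk q q (m-2))) (DMul (p 1) (q (m-2))))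
       (DMul (dsub (DMul (DConst 2) (q 1)) (p 2)) (p (m-2))))"

lemma deval_dsum: "deval (dsum ps) u = sum_list (map (\<lambda>p. deval p u) ps)"
  by (induction ps) (simp_all add: dsum_def fun_eq_iff)

lemma deval_dneg [simp]: "deval (dneg p) u = - deval p u"
  by (simp add: dneg_def fun_eq_iff)

lemma deval_dsub [simp]: "deval (dsub p q) u = deval p u - deval q u"
  by (simp add: dsub_def)

lemma sum_list_upt_Suc: "sum_list (map f [0..<Suc n]) = sum f {0..n}"
  by (simp only: interv_sum_list_conv_sum_set_nat set_upt atLeastLessThanSuc_atLeastAtMost)

lemma deval_dShk: "deval (dShk p q n) u = Shk (\<lambda>i. deval (p i) u) (\<lambda>i. deval (q i) u) n"
proof -
  have "deval (dShk p q n) u = sum_list (map (\<lambda>i. deval (p i) u * deval (q (n - i)) u) [0..<Suc n])"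
    unfolding dShk_def deval_dsum map_map
    by (intro arg_cong[where f=sum_list] map_cong refl) simp
  also have "\<dots> = Shk (\<lambda>i. deval (p i) u) (\<lambda>i. deval (q i) u) n"
    unfolding sum_list_upt_Suc Shk_def ..
  finally show ?thesis .
qed

lemma deval_hS:
  assumes "sm u"
  shows "deval (hS p q m) u = hF (\<lambda>i. deval (p i) u) (\<lambda>i. deval (q i) u) m"
proof -
  have A: "deval (hS p q m) u = deval (p 1) u * deval (p (m-2)) u - deval (dd (p (m-2))) u - deval (q (m-1)) u - deval (dShk p q (m-2)) u"
    unfolding hS_def by simp
  have B: "deval (dd (p (m-2))) u = deriv (deval (p (m-2)) u)" using deval_dd[OF assms] by simp
  show ?thesis unfolding A B hF_def deval_dShk ..
qed

lemma deval_kS: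
  assumes "sm u"
  shows "deval (kS p q m) u = kF (\<lambda>i. deval (p i) u) (\<lambda>i. deval (q i) u) m"
proof -
  have A: "deval (kS p q m) u = (\<lambda>_. 1/3) * (deval (p 1) u * deval (p (m-1)) u - deval (dd (p (m-1))) u
     - deval (dShk p q (m-1)) u - deval (dd (q (m-2))) u - deval (dShk q q (m-2)) u
     - deval (p 1) u * deval (q (m-2)) u + ((\<lambda>_. 2) * deval (q 1) u - deval (p 2) u) * deval (p (m-2)) u)"
    unfolding kS_def deval.simps deval_dsub by (rule refl)
  have B: "deval (dd (p (m-1))) u = deriv (deval (p (m-1)) u)" "deval (dd (q (m-2))) u = deriv (deval (q (m-2)) u)"
    using deval_dd[OF assms] by simp_all
  have C: "(\<lambda>_::real. 2::real) = (2::fn)" by (simp add: fun_eq_iff)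
  show ?thesis unfolding A B C kF_def deval_dShk ..
qed

definition nxt :: "nat \<Rightarrow> (nat \<Rightarrow> dpoly) \<Rightarrow> (nat \<Rightarrow> dpoly) \<Rightarrow> dpoly \<times> dpoly" where
  "nxt m p q = (if m = 1 then (DVar H1 0, DVar K1 0) else if m = 2 then (DVar H2 0, DVar K2 0)
                else (hS p q m, kS p q m))"

fun L :: "nat \<Rightarrow> (dpoly \<times> dpoly) list" where
  "L 0 = [(DConst 0, DConst 0)]"
| "L (Suc m) = L m @ [nxt (Suc m) (\<lambda>i. fst (L m ! i)) (\<lambda>i. snd (L m ! i))]"

definition PP :: "nat \<Rightarrow> dpoly" where "PP m = fst (L m ! m)"
definition QQ :: "nat \<Rightarrow> dpoly" where "QQ m = snd (L m ! m)"

lemma length_L [simp]: "length (L m) = Suc m"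
  by (induction m) auto

lemma L_nth: "i \<le> m \<Longrightarrow> L m ! i = L i ! i"
proof (induction m)
  case 0 then show ?case by simp
next
  case (Suc m)
  show ?case
  proof (cases "i = Suc m")
    case True then show ?thesis by simp
  next
    case False
    then have "i \<le> m" using Suc.prems by simp
    then have "L (Suc m) ! i = L m ! i" by (simp add: nth_append)
    then show ?thesis using Suc.IH \<open>i \<le> m\<close> by simp
  qed
qed

lemma dShk_cong:
  assumes "\<And>i. i \<le> n \<Longrightarrow> p i = p' i" "\<And>i. i \<le> n \<Longrightarrow> q i = q' i"
  shows "dShk p q n = dShk p' q' n"
proof -
  have "map (\<lambda>i. DMul (p i) (q (n - i))) [0..<Suc n] = map (\<lambda>i. DMul (p' i) (q' (n - i))) [0..<Suc n]"
    by (rule map_cong) (auto simp: assms)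
  then show ?thesis unfolding dShk_def by (rule arg_cong)
qed

lemma hS_cong:
  assumes "\<And>i. i < m \<Longrightarrow> p i = p' i" "\<And>i. i < m \<Longrightarrow> q i = q' i" "3 \<le> m"
  shows "hS p q m = hS p' q' m"
proof -
  have "dShk p q (m-2) = dShk p' q' (m-2)" by (rule dShk_cong) (use assms in auto)
  then show ?thesis unfolding hS_def using assms by simp
qed

lemma kS_cong:
  assumes "\<And>i. i < m \<Longrightarrow> p i = p' i" "\<And>i. i < m \<Longrightarrow> q i = q' i" "3 \<le> m"
  shows "kS p q m = kS p' q' m"
proof -
  have "dShk p q (m-1) = dShk p' q' (m-1)" by (rule dShk_cong) (use assms in auto)
  moreover have "dShk q q (m-2) = dShk q' q' (m-2)" by (rule dShk_cong) (use assms in auto)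
  ultimately show ?thesis unfolding kS_def using assms by simp
qed

lemma PQ_rec:
  assumes "3 \<le> m"
  shows "PP m = hS PP QQ m \<and> QQ m = kS PP QQ m"
proof -
  obtain m' where m': "m = Suc m'" using assms by (cases m) auto
  have e: "L m ! m = nxt m (\<lambda>i. fst (L m' ! i)) (\<lambda>i. snd (L m' ! i))"
    unfolding m' by (simp add: nth_append)
  have Lm: "L m' ! i = L i ! i" if "i < m" for i
  proof -
    have "i \<le> m'" using m' that by simp
    then show ?thesis by (rule L_nth)
  qed
  have p: "\<And>i. i < m \<Longrightarrow> fst (L m' ! i) = PP i" unfolding PP_def using Lm by simp
  have q: "\<And>i. i < m \<Longrightarrow> snd (L m' ! i) = QQ i" unfolding QQ_def using Lm by simp
  have n: "nxt m (\<lambda>i. fst (L m' ! i)) (\<lambda>i. snd (L m' ! i))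
      = (hS (\<lambda>i. fst (L m' ! i)) (\<lambda>i. snd (L m' ! i)) m, kS (\<lambda>i. fst (L m' ! i)) (\<lambda>i. snd (L m' ! i)) m)"
    using assms unfolding nxt_def by auto
  have "PP m = hS (\<lambda>i. fst (L m' ! i)) (\<lambda>i. snd (L m' ! i)) m"
    unfolding PP_def e n by simp
  also have "\<dots> = hS PP QQ m" by (rule hS_cong[OF p q assms])
  finally have 1: "PP m = hS PP QQ m" .
  have "QQ m = kS (\<lambda>i. fst (L m' ! i)) (\<lambda>i. snd (L m' ! i)) m"
    unfolding QQ_def e n by simp
  also have "\<dots> = kS PP QQ m" by (rule kS_cong[OF p q assms])
  finally show ?thesis using 1 by simp
qed

lemma PQ_0: "PP 0 = DConst 0" "QQ 0 = DConst 0"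
  by (simp_all add: PP_def QQ_def)

lemma PQ_1: "PP 1 = DVar H1 0" "QQ 1 = DVar K1 0"
  by (simp_all add: PP_def QQ_def nxt_def)

lemma PQ_1s: "PP (Suc 0) = DVar H1 0" "QQ (Suc 0) = DVar K1 0"
  using PQ_1 by simp_all

lemma PQ_2: "PP 2 = DVar H2 0" "QQ 2 = DVar K2 0"
  by (simp_all add: PP_def QQ_def nxt_def numeral_2_eq_2 nth_append)

lemma Shk_cong:
  assumes "\<And>i. i \<le> n \<Longrightarrow> h i = h' i" "\<And>i. i \<le> n \<Longrightarrow> k i = k' i"
  shows "Shk h k n = Shk h' k' n"
  unfolding Shk_def by (rule sum.cong) (auto simp: assms)

lemma hF_cong:
  assumes "\<And>i. i < m \<Longrightarrow> h i = h' i" "\<And>i. i < m \<Longrightarrow> k i = k' i" "3 \<le> m"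
  shows "hF h k m = hF h' k' m"
proof -
  have "Shk h k (m-2) = Shk h' k' (m-2)" by (rule Shk_cong) (use assms in auto)
  then show ?thesis unfolding hF_def using assms by simp
qed

lemma kF_cong:
  assumes "\<And>i. i < m \<Longrightarrow> h i = h' i" "\<And>i. i < m \<Longrightarrow> k i = k' i" "3 \<le> m"
  shows "kF h k m = kF h' k' m"
proof -
  have "Shk h k (m-1) = Shk h' k' (m-1)" by (rule Shk_cong) (use assms in auto)
  moreover have "Shk k k (m-2) = Shk k' k' (m-2)" by (rule Shk_cong) (use assms in auto)
  ultimately show ?thesis unfolding kF_def using assms by simp
qed

lemma Q23_rec:
  assumes "Q23 hc kc"
  shows "\<forall>m\<ge>3. hc m = hF hc kc m \<and> kc m = kF hc kc m"
  using assms ric_iff[of hc kc] rec_iff[of hc kc] unfolding Q23_def by simp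

lemma sm_params:
  assumes "Q23 hc kc"
  shows "sm (params hc kc)"
  unfolding sm_def
proof (intro allI)
  fix v n x
  have "smooth (params hc kc v)"
    using assms unfolding Q23_def by (cases v) (simp_all add: params_def)
  then show "(deriv ^^ n) (params hc kc v) differentiable at x" unfolding smooth_def by blast
qed

lemma PQ_sem:
  assumes Q: "Q23 hc kc"
  shows "hc m = deval (PP m) (params hc kc) \<and> kc m = deval (QQ m) (params hc kc)"
proof (induction m rule: less_induct)
  case (less m)
  define u where "u = params hc kc"
  have su: "sm u" unfolding u_def by (rule sm_params[OF Q])
  have h0: "hc 0 = 0" and k0: "kc 0 = 0" using Q unfolding Q23_def by auto
  consider "m = 0" | "m = 1" | "m = 2" | "3 \<le> m" by linarith
  then show ?case
  proof cases
    case 1 then show ?thesis using h0 k0 by (simp add: PQ_0 fun_eq_iff)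
  next
    case 2 then show ?thesis by (simp add: PQ_1 PQ_1s params_def)
  next
    case 3 then show ?thesis by (simp add: PQ_2 params_def)
  next
    case 4
    have IH1: "\<And>i. i < m \<Longrightarrow> hc i = deval (PP i) u" and IH2: "\<And>i. i < m \<Longrightarrow> kc i = deval (QQ i) u"
      using less.IH unfolding u_def by auto
    have r: "hc m = hF hc kc m" "kc m = kF hc kc m" using Q23_rec[OF Q] 4 by auto
    have "hc m = hF (\<lambda>i. deval (PP i) u) (\<lambda>i. deval (QQ i) u) m"
      using r(1) hF_cong[OF IH1 IH2 4] by simp
    also have "\<dots> = deval (hS PP QQ m) u" by (rule deval_hS[OF su, symmetric])
    also have "\<dots> = deval (PP m) u" using PQ_rec[OF 4] by simp
    finally have A: "hc m = deval (PP m) u" .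
    have "kc m = kF (\<lambda>i. deval (PP i) u) (\<lambda>i. deval (QQ i) u) m"
      using r(2) kF_cong[OF IH1 IH2 4] by simp
    also have "\<dots> = deval (kS PP QQ m) u" by (rule deval_kS[OF su, symmetric])
    also have "\<dots> = deval (QQ m) u" using PQ_rec[OF 4] by simp
    finally have B: "kc m = deval (QQ m) u" .
    show ?thesis using A B unfolding u_def by simp
  qed
qed

lemma part3:
  assumes "smooth a1" "smooth a2" "smooth b1" "smooth b2"
  shows "\<exists>!p. Q23 (fst p) (snd p) \<and> fst p 1 = a1 \<and> fst p 2 = a2 \<and> snd p 1 = b1 \<and> snd p 2 = b2"
proof -
  define u where "u = (\<lambda>v. case v of H1 \<Rightarrow> a1 | H2 \<Rightarrow> a2 | K1 \<Rightarrow> b1 | K2 \<Rightarrow> b2)"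
  have su: "sm u" unfolding sm_def
  proof (intro allI)
    fix v n x
    have "smooth (u v)" using assms unfolding u_def by (cases v) simp_all
    then show "(deriv ^^ n) (u v) differentiable at x" unfolding smooth_def by blast
  qed
  define hc where "hc = (\<lambda>m. deval (PP m) u)"
  define kc where "kc = (\<lambda>m. deval (QQ m) u)"
  have v: "hc 1 = a1" "hc 2 = a2" "kc 1 = b1" "kc 2 = b2"
    unfolding hc_def kc_def u_def by (simp_all add: PQ_1 PQ_1s PQ_2)
  have h0: "hc 0 = 0" "kc 0 = 0" unfolding hc_def kc_def by (simp_all add: PQ_0 fun_eq_iff)
  have rec: "\<forall>m\<ge>3. hc m = hF hc kc m \<and> kc m = kF hc kc m"
  proof (intro allI impI)
    fix m :: nat assume m: "3 \<le> m"
    have "hc m = deval (hS PP QQ m) u" unfolding hc_def using PQ_rec[OF m] by simp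
    also have "\<dots> = hF hc kc m" unfolding deval_hS[OF su] hc_def kc_def ..
    finally have A: "hc m = hF hc kc m" .
    have "kc m = deval (kS PP QQ m) u" unfolding kc_def using PQ_rec[OF m] by simp
    also have "\<dots> = kF hc kc m" unfolding deval_kS[OF su] hc_def kc_def ..
    finally show "hc m = hF hc kc m \<and> kc m = kF hc kc m" using A by simp
  qed
  have ric: "riccati hc kc" using ric_iff[of hc kc] rec_iff[of hc kc] h0 rec by simp
  have sms: "\<forall>n. smooth (hc n) \<and> smooth (kc n)"
    unfolding hc_def kc_def using deval_smooth[OF su] by simp
  have Q: "Q23 hc kc" unfolding Q23_def using h0 sms ric by simp
  show ?thesis
  proof (rule ex1I[of _ "(hc, kc)"])
    show "Q23 (fst (hc, kc)) (snd (hc, kc)) \<and> fst (hc, kc) 1 = a1 \<and> fst (hc, kc) 2 = a2 \<and>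
          snd (hc, kc) 1 = b1 \<and> snd (hc, kc) 2 = b2" using Q v by simp
  next
    fix p assume p: "Q23 (fst p) (snd p) \<and> fst p 1 = a1 \<and> fst p 2 = a2 \<and> snd p 1 = b1 \<and> snd p 2 = b2"
    have pu: "params (fst p) (snd p) = u"
    proof
      fix v show "params (fst p) (snd p) v = u v" using p unfolding u_def params_def by (cases v) simp_all
    qed
    have "fst p = hc"
    proof
      fix m show "fst p m = hc m" using PQ_sem[of "fst p" "snd p" m] p pu unfolding hc_def by simp
    qed
    moreover have "snd p = kc"
    proof
      fix m show "snd p m = kc m" using PQ_sem[of "fst p" "snd p" m] p pu unfolding kc_def by simp
    qed
    ultimately show "p = (hc, kc)" by (simp add: prod_eq_iff)
  qed
qed

theorem mainTheorem12:
  shows "(\<exists>P Q :: nat \<Rightarrow> dpoly. \<forall>hc kc. Q23 hc kc \<longrightarrow>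
            (\<forall>j\<ge>3. hc j = deval (P j) (params hc kc) \<and> kc j = deval (Q j) (params hc kc)))
       \<and> (\<forall>hc kc. Q23 hc kc \<longrightarrow> hc 3 = hc 1 * hc 1 - deriv (hc 1) - kc 2)
       \<and> (\<forall>a1 a2 b1 b2. smooth a1 \<and> smooth a2 \<and> smooth b1 \<and> smooth b2 \<longrightarrow>
            (\<exists>!p. Q23 (fst p) (snd p) \<and> fst p 1 = a1 \<and> fst p 2 = a2
                  \<and> snd p 1 = b1 \<and> snd p 2 = b2))"
proof (intro conjI)
  show "\<exists>P Q :: nat \<Rightarrow> dpoly. \<forall>hc kc. Q23 hc kc \<longrightarrow>
            (\<forall>j\<ge>3. hc j = deval (P j) (params hc kc) \<and> kc j = deval (Q j) (params hc kc))"
    using PQ_sem by blast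
next
  show "\<forall>hc kc. Q23 hc kc \<longrightarrow> hc 3 = hc 1 * hc 1 - deriv (hc 1) - kc 2"
  proof (intro allI impI)
    fix hc kc assume Q: "Q23 hc kc"
    have h0: "hc 0 = 0" and k0: "kc 0 = 0" using Q unfolding Q23_def by auto
    have "hc 3 = hF hc kc 3" using Q23_rec[OF Q] by simp
    moreover have "Shk hc kc 1 = 0" unfolding Shk_def using h0 k0 by simp
    ultimately show "hc 3 = hc 1 * hc 1 - deriv (hc 1) - kc 2" unfolding hF_def by simp
  qed
next
  show "\<forall>a1 a2 b1 b2. smooth a1 \<and> smooth a2 \<and> smooth b1 \<and> smooth b2 \<longrightarrow>
            (\<exists>!p. Q23 (fst p) (snd p) \<and> fst p 1 = a1 \<and> fst p 2 = a2
                  \<and> snd p 1 = b1 \<and> snd p 2 = b2)"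
    using part3 by blast
qed

end
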